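(* Let $\rho_{ABC}=\sum_bp_B(b)|b\rangle\langle b|_B\otimes\rho^{|b}_{AC}$ be a state classical on $B$, and $\alpha\in(1,\infty)$. Then $$H_\alpha(A|B^{\uparrow}C^{\downarrow})_\rho=\sup_{q_B\in\Delta(B)}-D_\alpha(\rho_{ABC}\|I_A\otimes\sigma_{BC}),$$ where $\sigma_{BC}=\sum_bq_B(b)|b\rangle\langle b|\otimes\rho^{|b}_C$ and $\rho^{|b}_C=\mathrm{tr}_A[\rho^{|b}_{AC}]$.
   Context: Finite-dimensional spaces, $\log$ base 2. For $\alpha>1$, $D_\alpha(\rho\|\sigma)=\frac{1}{\alpha-1}\log\big(\mathrm{tr}[(\sigma^{\frac{1-\alpha}{2\alpha}}\rho\sigma^{\frac{1-\alpha}{2\alpha}})^\alpha]/\mathrm{tr}\rho\big)$ if $\mathrm{supp}\rho\subseteq\mathrm{supp}\sigma$, else $+\infty$. $H^{\downarrow}_\alpha(A|C)_\rho=-D_\alpha(\rho_{AC}\|I_A\otimes\rho_C)$. Partially optimized conditional Rényi entropy: $H_\alpha(A|B^{\uparrow}C^{\downarrow})_\rho:=\frac{\alpha}{1-\alpha}\log\big(\sum_bp_B(b)2^{\frac{1-\alpha}{\alpha}H^{\downarrow}_\alpha(A|C)_{\rho^{|b}}}\big)$. $\Delta(B)$ is the set of probability distributions on the alphabet of $B$. *)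

theory Defs
  imports "HOL-Analysis.Analysis"
begin

text \<open>Complex square matrices indexed by a finite type 'n: type complex^'n^'n.
  Composite systems use product index types, e.g. A B C has index type 'a \<times> 'b \<times> 'c.\<close>

type_synonym 'n cmat = "complex^'n^'n"

definition adj :: "('n::finite) cmat \<Rightarrow> 'n cmat" where
  "adj M = (\<chi> i j. cnj (M $ j $ i))"

definition hermitian :: "('n::finite) cmat \<Rightarrow> bool" where
  "hermitian M \<longleftrightarrow> adj M = M"

definition unitary :: "('n::finite) cmat \<Rightarrow> bool" where
  "unitary U \<longleftrightarrow> adj U ** U = mat 1 \<and> U ** adj U = mat 1"

definition diagm :: "(('n::finite) \<Rightarrow> real) \<Rightarrow> 'n cmat" where
  "diagm l = (\<chi> i j. if i = j then complex_of_real (l i) else 0)"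

definition mtrace :: "('n::finite) cmat \<Rightarrow> complex" where
  "mtrace M = (\<Sum>i\<in>UNIV. M $ i $ i)"

definition psd :: "('n::finite) cmat \<Rightarrow> bool" where
  "psd M \<longleftrightarrow> hermitian M \<and>
     (\<forall>v::complex^'n. 0 \<le> Re (\<Sum>i\<in>UNIV. \<Sum>j\<in>UNIV. cnj (v $ i) * M $ i $ j * v $ j))"

definition density_op :: "('n::finite) cmat \<Rightarrow> bool" where
  "density_op M \<longleftrightarrow> psd M \<and> mtrace M = 1"

text \<open>Functional calculus for Hermitian matrices via a spectral decomposition
  (well defined, i.e. independent of the chosen decomposition).\<close>
definition mat_fun :: "(real \<Rightarrow> real) \<Rightarrow> ('n::finite) cmat \<Rightarrow> 'n cmat" where
  "mat_fun f M = (SOME N. \<exists>U l. unitary U \<and> M = U ** diagm l ** adj U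
                               \<and> N = U ** diagm (f \<circ> l) ** adj U)"

text \<open>Matrix power of a PSD matrix; powers are taken on the support
  (0 powr x = 0, i.e. generalized inverse convention for negative exponents).\<close>
definition mpow :: "('n::finite) cmat \<Rightarrow> real \<Rightarrow> 'n cmat" where
  "mpow M x = mat_fun (\<lambda>t. t powr x) M"

definition supp :: "('n::finite) cmat \<Rightarrow> (complex^'n) set" where
  "supp M = range (\<lambda>v. M *v v)"

definition renyi_D :: "real \<Rightarrow> ('n::finite) cmat \<Rightarrow> 'n cmat \<Rightarrow> ereal" where
  "renyi_D \<alpha> \<rho> \<sigma> =
    (if supp \<rho> \<subseteq> supp \<sigma> then
       ereal (1 / (\<alpha> - 1) * log 2
         (Re (mtrace (mpow (mpow \<sigma> ((1 - \<alpha>) / (2 * \<alpha>)) ** \<rho> ** mpow \<sigma> ((1 - \<alpha>) / (2 * \<alpha>))) \<alpha>))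
          / Re (mtrace \<rho>)))
     else \<infinity>)"

definition kron :: "('m::finite) cmat \<Rightarrow> ('n::finite) cmat \<Rightarrow> ('m \<times> 'n) cmat" where
  "kron X Y = (\<chi> x y. X $ fst x $ fst y * Y $ snd x $ snd y)"

definition ptrace1 :: "('a::finite \<times> 'c::finite) cmat \<Rightarrow> 'c cmat" where
  "ptrace1 M = (\<chi> c c'. \<Sum>a\<in>UNIV. M $ (a, c) $ (a, c'))"

definition cond_H_down :: "real \<Rightarrow> ('a::finite \<times> 'c::finite) cmat \<Rightarrow> ereal" where
  "cond_H_down \<alpha> \<rho> = - renyi_D \<alpha> \<rho> (kron (mat 1 :: 'a cmat) (ptrace1 \<rho>))"

text \<open>Partially optimized conditional entropy H_alpha(A|B^up C^down) of the cq state
  given by distribution p on B and conditional states rhoc b on AC.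
  (The entropies H_down of states are always finite.)\<close>
definition H_partial :: "real \<Rightarrow> ('b::finite \<Rightarrow> real) \<Rightarrow> ('b \<Rightarrow> ('a::finite \<times> 'c::finite) cmat) \<Rightarrow> real" where
  "H_partial \<alpha> p rhoc = \<alpha> / (1 - \<alpha>) * log 2
     (\<Sum>b\<in>UNIV. p b * 2 powr ((1 - \<alpha>) / \<alpha> * real_of_ereal (cond_H_down \<alpha> (rhoc b))))"

definition prob_dists :: "('b::finite \<Rightarrow> real) set" where
  "prob_dists = {q. (\<forall>b. 0 \<le> q b) \<and> (\<Sum>b\<in>UNIV. q b) = 1}"

text \<open>rho_ABC = sum_b p(b) |b><b|_B \<otimes> rho^{|b}_AC, written on index type 'a \<times> 'b \<times> 'c.\<close>
definition cq_state :: "('b::finite \<Rightarrow> real) \<Rightarrow> ('b \<Rightarrow> ('a::finite \<times> 'c::finite) cmat) \<Rightarrow> ('a \<times> 'b \<times> 'c) cmat" where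
  "cq_state p rhoc = (\<chi> x y. case x of (a, b, c) \<Rightarrow> case y of (a', b', c') \<Rightarrow>
      if b = b' then complex_of_real (p b) * rhoc b $ (a, c) $ (a', c') else 0)"

definition sigma_BC :: "('b::finite \<Rightarrow> real) \<Rightarrow> ('b \<Rightarrow> ('a::finite \<times> 'c::finite) cmat) \<Rightarrow> ('b \<times> 'c) cmat" where
  "sigma_BC q rhoc = (\<chi> x y. case x of (b, c) \<Rightarrow> case y of (b', c') \<Rightarrow>
      if b = b' then complex_of_real (q b) * ptrace1 (rhoc b) $ c $ c' else 0)"

end

theory Submission
  imports Defs
begin

lemma adj_adj[simp]: "adj (adj A) = A"
  by (simp add: adj_def vec_eq_iff)

lemma adj_mult: "adj (A ** B) = adj B ** adj A"
  by (simp add: adj_def matrix_matrix_mult_def vec_eq_iff mult.commute)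

lemma adj_mat1[simp]: "adj (mat 1) = mat 1"
  by (simp add: adj_def mat_def vec_eq_iff)

lemma adj_diagm[simp]: "adj (diagm l) = diagm l"
  by (simp add: adj_def diagm_def vec_eq_iff)

lemma mult_diagm_entry[simp]: "(A ** diagm l) $ i $ j = A $ i $ j * of_real (l j)"
  by (simp add: matrix_matrix_mult_def diagm_def if_distrib if_distribR cong: if_cong)

lemma diagm_mult_entry[simp]: "(diagm l ** A) $ i $ j = of_real (l i) * A $ i $ j"
  by (simp add: matrix_matrix_mult_def diagm_def if_distrib if_distribR cong: if_cong)

lemma diagm_entry: "diagm l $ i $ j = (if i = j then of_real (l i) else 0)"
  by (simp add: diagm_def)

lemma unitary_adj: "unitary U \<Longrightarrow> unitary (adj U)"
  by (simp add: unitary_def)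

lemma unitary_mult: "unitary U \<Longrightarrow> unitary V \<Longrightarrow> unitary (U ** V)"
  unfolding unitary_def adj_mult
  by (metis matrix_mul_assoc matrix_mul_lid)

lemma unitary_mat1[simp]: "unitary (mat 1)"
  by (simp add: unitary_def)

lemma decomp_unique:
  assumes U: "unitary U" and V: "unitary V"
    and eq: "U ** diagm l ** adj U = V ** diagm m ** adj V"
  shows "U ** diagm (f \<circ> l) ** adj U = V ** diagm (f \<circ> m) ** adj V"
proof -
  define W where "W = adj V ** U"
  have "adj V ** (U ** diagm l ** adj U) ** U = adj V ** (V ** diagm m ** adj V) ** U"
    using eq by simp
  hence WL: "W ** diagm l = diagm m ** W"
    using U V unfolding W_def unitary_def
    by (metis matrix_mul_assoc matrix_mul_lid matrix_mul_rid)
  have WF: "W ** diagm (f \<circ> l) = diagm (f \<circ> m) ** W"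
  proof -
    { fix i j
      have e: "W $ i $ j * of_real (l j) = of_real (m i) * W $ i $ j"
        using arg_cong[OF WL, of "\<lambda>X. X $ i $ j"] by simp
      have "W $ i $ j * of_real (f (l j)) = of_real (f (m i)) * W $ i $ j"
      proof (cases "W $ i $ j = 0")
        case False
        with e have "l j = m i" by (simp add: mult.commute)
        thus ?thesis by (simp add: mult.commute)
      qed simp }
    thus ?thesis by (simp add: vec_eq_iff)
  qed
  have UVW: "U = V ** W" using V unfolding W_def unitary_def
    by (metis matrix_mul_assoc matrix_mul_lid)
  have WW: "W ** adj W = mat 1"
    using U V unfolding W_def unitary_def adj_mult adj_adj
    by (metis matrix_mul_assoc matrix_mul_rid)
  have "U ** diagm (f \<circ> l) ** adj U = V ** (W ** diagm (f \<circ> l)) ** adj W ** adj V"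
    unfolding UVW adj_mult by (simp add: matrix_mul_assoc)
  also have "\<dots> = V ** diagm (f \<circ> m) ** (W ** adj W) ** adj V"
    unfolding WF by (simp add: matrix_mul_assoc)
  finally show ?thesis using WW by simp
qed

lemma mat_fun_eq:
  assumes U: "unitary U" and M: "M = U ** diagm l ** adj U"
  shows "mat_fun f M = U ** diagm (f \<circ> l) ** adj U"
proof -
  have ex: "\<exists>N. \<exists>U l. unitary U \<and> M = U ** diagm l ** adj U \<and> N = U ** diagm (f \<circ> l) ** adj U"
    using U M by blast
  from someI_ex[OF ex] obtain U' l' where
    "unitary U'" "M = U' ** diagm l' ** adj U'" "mat_fun f M = U' ** diagm (f \<circ> l') ** adj U'"
    unfolding mat_fun_def by blast
  thus ?thesis using decomp_unique[OF _ U, of U' l' l f] M by simp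
qed

definition cinner :: "complex^'n::finite \<Rightarrow> complex^'n \<Rightarrow> complex" where
  "cinner v w = (\<Sum>i\<in>UNIV. cnj (v $ i) * w $ i)"

lemma cinner_add_left: "cinner (u + v) w = cinner u w + cinner v w"
  by (simp add: cinner_def sum.distrib algebra_simps)
lemma cinner_add_right: "cinner w (u + v) = cinner w u + cinner w v"
  by (simp add: cinner_def sum.distrib algebra_simps)
lemma cinner_diff_left: "cinner (u - v) w = cinner u w - cinner v w"
  by (simp add: cinner_def sum_subtractf algebra_simps)
lemma cinner_diff_right: "cinner w (u - v) = cinner w u - cinner w v"
  by (simp add: cinner_def sum_subtractf algebra_simps)
lemma cinner_scale_left: "cinner (c *s u) w = cnj c * cinner u w"
  by (simp add: cinner_def sum_distrib_left algebra_simps)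
lemma cinner_scale_right: "cinner w (c *s u) = c * cinner w u"
  by (simp add: cinner_def sum_distrib_left algebra_simps)
lemma cinner_zero_left[simp]: "cinner 0 w = 0" by (simp add: cinner_def)
lemma cinner_zero_right[simp]: "cinner w 0 = 0" by (simp add: cinner_def)
lemma cinner_cnj: "cnj (cinner v w) = cinner w v"
  by (simp add: cinner_def mult.commute)

lemmas cinner_simps = cinner_add_left cinner_add_right cinner_diff_left cinner_diff_right
  cinner_scale_left cinner_scale_right

lemma cinner_self: "cinner v v = complex_of_real ((norm v)^2)"
proof -
  have "(norm v)^2 = (\<Sum>i\<in>UNIV. (cmod (v $ i))^2)"
    by (simp add: norm_vec_def L2_set_def sum_nonneg)
  moreover have "cnj (v $ i) * v $ i = complex_of_real ((cmod (v $ i))^2)" for i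
    by (metis complex_norm_square mult.commute)
  ultimately show ?thesis by (simp add: cinner_def)
qed

lemma cinner_self_eq0: "cinner v v = 0 \<longleftrightarrow> v = 0"
  by (simp add: cinner_self)

lemma Re_cinner_self_ge0: "0 \<le> Re (cinner v v)"
  by (simp add: cinner_self)

lemma matvec_scale: "A *v (c *s x) = c *s (A *v (x::complex^'n::finite))"
  apply (simp add: matrix_vector_mult_def vec_eq_iff sum_distrib_left)
  apply (intro allI sum.cong; simp add: algebra_simps)
  done

lemma cinner_adj: "cinner x (adj A *v y) = cinner (A *v x) y"
proof -
  have "cinner x (adj A *v y) = (\<Sum>i\<in>UNIV. \<Sum>j\<in>UNIV. cnj (x $ i) * cnj (A $ j $ i) * y $ j)"
    by (simp add: cinner_def adj_def matrix_vector_mult_def sum_distrib_left algebra_simps)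
  also have "\<dots> = (\<Sum>j\<in>UNIV. \<Sum>i\<in>UNIV. cnj (x $ i) * cnj (A $ j $ i) * y $ j)"
    by (rule sum.swap)
  also have "\<dots> = cinner (A *v x) y"
    by (simp add: cinner_def matrix_vector_mult_def sum_distrib_right sum_distrib_left algebra_simps)
  finally show ?thesis .
qed

lemma herm_cinner: "hermitian A \<Longrightarrow> cinner x (A *v y) = cinner (A *v x) y"
  by (metis cinner_adj hermitian_def)

lemma psd_iff: "psd M \<longleftrightarrow> hermitian M \<and> (\<forall>v. 0 \<le> Re (cinner v (M *v v)))"
proof -
  have "cinner v (M *v v) = (\<Sum>i\<in>UNIV. \<Sum>j\<in>UNIV. cnj (v $ i) * M $ i $ j * v $ j)" for v
    by (simp add: cinner_def matrix_vector_mult_def sum_distrib_left algebra_simps)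
  thus ?thesis by (simp add: psd_def)
qed

lemma axis_col: "(A *v axis j 1) $ i = A $ i $ j"
  by (simp add: matrix_vector_mult_def axis_def if_distrib if_distribR cong: if_cong)

lemma cinner_axis_left: "cinner (axis j 1) v = v $ j"
  by (simp add: cinner_def axis_def if_distrib if_distribR cong: if_cong)

lemma cinner_axis_right: "cinner v (axis j 1) = cnj (v $ j)"
  by (simp add: cinner_def axis_def if_distrib if_distribR cong: if_cong)

lemma form_zero_orth:
  fixes B :: "complex^'n::finite^'n"
  assumes herm: "hermitian B"
    and Wadd: "\<And>x y. x \<in> W \<Longrightarrow> y \<in> W \<Longrightarrow> x + y \<in> W"
    and Wscale: "\<And>c x. x \<in> W \<Longrightarrow> c *s x \<in> W"
    and pos: "\<And>u. u \<in> W \<Longrightarrow> 0 \<le> Re (cinner u (B *v u))"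
    and v: "v \<in> W" and zero: "Re (cinner v (B *v v)) = 0"
    and w: "w \<in> W"
  shows "cinner w (B *v v) = 0"
proof (rule ccontr)
  define z where "z = cinner w (B *v v)"
  assume "cinner w (B *v v) \<noteq> 0"
  hence z0: "z \<noteq> 0" by (simp add: z_def)
  define c where "c = Re (cinner w (B *v w))"
  have c0: "0 \<le> c" using pos[OF w] by (simp add: c_def)
  define s where "s = 1 / (c + 1)"
  have s0: "0 < s" using c0 by (simp add: s_def)
  have sc: "s * c < 1" using c0 by (simp add: s_def field_simps)
  define t where "t = - complex_of_real s * z"
  have "v + t *s w \<in> W" using v w Wadd Wscale by blast
  hence ge: "0 \<le> Re (cinner (v + t *s w) (B *v (v + t *s w)))" by (rule pos)
  have vw: "cinner v (B *v w) = cnj z"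
    unfolding z_def by (metis herm_cinner[OF herm] cinner_cnj)
  have "cinner (v + t *s w) (B *v (v + t *s w)) =
      cinner v (B *v v) + t * cnj z + cnj t * z + cnj t * t * cinner w (B *v w)"
    by (simp add: cinner_simps matrix_vector_right_distrib matvec_scale vw z_def algebra_simps)
  also have "Re \<dots> = - 2 * s * (cmod z)^2 + s^2 * (cmod z)^2 * c"
    using zero cmod_power2[of z] unfolding power2_eq_square
    by (simp add: t_def c_def algebra_simps power2_eq_square complex_mult_cnj[symmetric] Re_complex_of_real cmod_power2)
  finally have "0 \<le> s * (cmod z)^2 * (s * c - 2)"
    using ge by (simp add: algebra_simps power2_eq_square)
  moreover have "s * (cmod z)^2 * (s * c - 2) < 0"
    using s0 z0 sc by (intro mult_pos_neg) auto
  ultimately show False by simp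
qed

lemma qform_expand: "cinner v (N *v v) = (\<Sum>i\<in>UNIV. \<Sum>j\<in>UNIV. cnj (v $ i) * N $ i $ j * v $ j)"
  by (simp add: cinner_def matrix_vector_mult_def sum_distrib_left algebra_simps)

lemma mat_scale_vec: "mat c *v u = c *s (u::complex^'n::finite)"
  by (simp add: mat_def matrix_vector_mult_def vec_eq_iff if_distrib if_distribR cong: if_cong)

lemma qform_scale: "cinner (c *s u) (N *v (c *s u)) = cnj c * c * cinner u (N *v (u::complex^'n::finite))"
  by (simp add: cinner_simps matvec_scale)

lemma norm_axis_c[simp]: "norm (axis j (1::complex) :: complex^'n::finite) = 1"
proof -
  have "cinner (axis j 1) (axis j (1::complex) :: complex^'n) = 1"
    unfolding cinner_axis_left by (simp add: axis_def)
  hence "(norm (axis j (1::complex) :: complex^'n))^2 = 1"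
    unfolding cinner_self by (simp del: of_real_power)
  thus ?thesis by (simp add: power2_eq_1_iff)
qed

lemma norm_scale_c: "norm (c *s u) = cmod c * norm (u::complex^'n::finite)"
proof -
  have "complex_of_real ((norm (c *s u))^2) = complex_of_real ((cmod c * norm u)^2)"
  proof -
    have cc: "cnj c * c = complex_of_real ((cmod c)^2)" by (metis complex_norm_square mult.commute)
    have "cinner (c *s u) (c *s u) = cnj c * c * cinner u u"
      unfolding cinner_simps by simp
    thus ?thesis unfolding cc cinner_self by (simp add: power_mult_distrib)
  qed
  hence "(norm (c *s u))^2 = (cmod c * norm u)^2" using of_real_eq_iff by blast
  thus ?thesis by (simp add: power2_eq_iff_nonneg)
qed

lemma herm_eigvec_sub:
  fixes N :: "complex^'n::finite^'n"
  assumes herm: "hermitian N" and j: "j \<notin> K"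
    and inv: "\<And>v. (\<forall>i\<in>K. v$i = 0) \<Longrightarrow> (\<forall>i\<in>K. (N *v v)$i = 0)"
  shows "\<exists>w lam. (\<forall>i\<in>K. w$i = 0) \<and> norm w = 1 \<and> N *v w = lam *s w"
proof -
  define W where "W = {v::complex^'n. \<forall>i\<in>K. v$i = 0}"
  have WI: "W = (\<Inter>i\<in>K. {v. v$i = 0})" unfolding W_def by auto
  have "closed {v::complex^'n. v $ i = 0}" for i
    by (intro closed_Collect_eq continuous_intros)
  hence cW: "closed W" unfolding WI by auto
  define S where "S = sphere 0 1 \<inter> W"
  have cS: "compact S" unfolding S_def using cW by auto
  have "axis j 1 \<in> W" unfolding W_def using j by (auto simp: axis_def)
  hence jS: "axis j 1 \<in> S" unfolding S_def by simp
  define f where "f = (\<lambda>v::complex^'n. Re (cinner v (N *v v)))"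
  have "continuous_on S f" unfolding f_def qform_expand
    by (intro continuous_intros)
  then obtain v0 where v0S: "v0 \<in> S" and mx: "\<And>y. y \<in> S \<Longrightarrow> f y \<le> f v0"
    using continuous_attains_sup[OF cS] jS by blast
  define lam where "lam = f v0"
  define B where "B = mat (complex_of_real lam) - N"
  have hB: "hermitian B" using herm
    unfolding B_def hermitian_def by (simp add: adj_def mat_def vec_eq_iff)
  have Bq: "cinner u (B *v u) = complex_of_real lam * cinner u u - cinner u (N *v u)" for u
    unfolding B_def by (simp add: matrix_vector_mult_diff_rdistrib mat_scale_vec cinner_simps)
  have ReBq: "Re (cinner u (B *v u)) = lam * (norm u)^2 - f u" for u
    unfolding Bq f_def cinner_self by simp
  have Wadd: "x + y \<in> W" if "x \<in> W" "y \<in> W" for x y using that unfolding W_def by auto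
  have Wsc: "c *s x \<in> W" if "x \<in> W" for x c using that unfolding W_def by auto
  have pos: "0 \<le> Re (cinner u (B *v u))" if u: "u \<in> W" for u
  proof (cases "u = 0")
    case True thus ?thesis by simp
  next
    case False
    define c where "c = complex_of_real (1 / norm u)"
    have nu: "norm u > 0" using False by simp
    have "c *s u \<in> S" unfolding S_def using Wsc[OF u]
      using nu by (simp add: c_def norm_scale_c norm_divide)
    hence "f (c *s u) \<le> lam" using mx unfolding lam_def by blast
    moreover have "f (c *s u) = f u / (norm u)^2"
      unfolding f_def qform_scale by (simp add: c_def power2_eq_square)
    ultimately have "f u \<le> lam * (norm u)^2" using nu by (simp add: field_simps)
    thus ?thesis unfolding ReBq by simp
  qed
  have v0W: "v0 \<in> W" and nv0: "norm v0 = 1" using v0S unfolding S_def by auto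
  have zero: "Re (cinner v0 (B *v v0)) = 0" unfolding ReBq nv0 lam_def by simp
  have BvW: "B *v v0 \<in> W"
    using v0W inv unfolding B_def W_def
    by (simp add: matrix_vector_mult_diff_rdistrib mat_scale_vec)
  have "cinner (B *v v0) (B *v v0) = 0"
    by (rule form_zero_orth[OF hB Wadd Wsc pos v0W zero BvW])
  hence "B *v v0 = 0" by (simp add: cinner_self_eq0)
  hence "N *v v0 = complex_of_real lam *s v0"
    unfolding B_def by (simp add: matrix_vector_mult_diff_rdistrib mat_scale_vec)
  thus ?thesis using v0W nv0 unfolding W_def by blast
qed

definition hc :: "complex^'n::finite \<Rightarrow> real" where
  "hc v = (if v = 0 then 0 else 2 / (norm v)^2)"

definition house :: "complex^'n::finite \<Rightarrow> complex^'n^'n" where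
  "house v = (\<chi> i k. (if i = k then 1 else 0) - complex_of_real (hc v) * v$i * cnj (v$k))"

lemma house_apply: "house v *v x = x - (complex_of_real (hc v) * cinner v x) *s v"
proof -
  define c where "c = complex_of_real (hc v)"
  have "(house v *v x)$i = x$i - c * cinner v x * v$i" for i
  proof -
    have "(house v *v x)$i = (\<Sum>k\<in>UNIV. (if i = k then x$k else 0) - c * v$i * (cnj (v$k) * x$k))"
    proof -
      have m: "(if P then 1 else 0) * a = (if P then a else (0::complex))" for P a by simp
      show ?thesis unfolding house_def matrix_vector_mult_def c_def
        by (simp add: left_diff_distrib mult.assoc m)
    qed
    also have "\<dots> = x$i - c * v$i * cinner v x"
      by (simp add: sum_subtractf cinner_def sum_distrib_left)
    finally show ?thesis by (simp add: mult_ac)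
  qed
  thus ?thesis by (simp add: vec_eq_iff c_def)
qed

lemma house_herm: "adj (house v) = house v"
  by (simp add: house_def adj_def vec_eq_iff)

lemma house_invol: "house v *v (house v *v x) = x"
proof (cases "v = 0")
  case True thus ?thesis by (simp add: house_apply hc_def)
next
  case False
  have nv: "norm v \<noteq> 0" using False by simp
  have cv: "complex_of_real (hc v) * cinner v v = 2"
    using nv by (simp add: hc_def cinner_self del: of_real_power)
  have "cinner v (house v *v x) = cinner v x - (complex_of_real (hc v) * cinner v x) * cinner v v"
    unfolding house_apply cinner_simps ..
  also have "\<dots> = cinner v x - cinner v x * (complex_of_real (hc v) * cinner v v)"
    by (simp only: mult_ac)
  also have "\<dots> = - cinner v x" unfolding cv by simp
  finally have "cinner v (house v *v x) = - cinner v x" .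
  thus ?thesis unfolding house_apply[of v "house v *v x"]
    by (simp add: house_apply algebra_simps)
qed

lemma house_sq: "house v ** house v = mat 1"
  unfolding matrix_eq by (simp add: matrix_vector_mul_assoc[symmetric] house_invol)

lemma house_unitary: "unitary (house v)"
  by (simp add: unitary_def house_herm house_sq)

lemma house_fix: "cinner v x = 0 \<Longrightarrow> house v *v x = x"
  by (simp add: house_apply)

lemma house_map:
  assumes ny: "norm y = 1" and yj: "y $ j = complex_of_real r"
  shows "house (axis j 1 - y) *v axis j 1 = y"
proof (cases "axis j 1 - y = 0")
  case True thus ?thesis by (simp add: house_apply hc_def)
next
  case False
  define v where "v = axis j 1 - y"
  have v0: "v \<noteq> 0" using False by (simp add: v_def)
  have ajj: "axis j 1 $ j = (1::complex)" by (simp add: axis_def)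
  have c1: "cinner v (axis j 1) = 1 - complex_of_real r"
    unfolding v_def cinner_axis_right by (simp add: ajj yj)
  have yy: "cinner y y = 1" using ny by (simp add: cinner_self)
  have c2: "cinner v v = 2 - 2 * complex_of_real r"
    unfolding v_def cinner_simps cinner_axis_right cinner_axis_left yy
    by (simp add: ajj yj)
  have "complex_of_real ((norm v)^2) = complex_of_real (2 - 2 * r)"
    using c2 unfolding cinner_self by simp
  hence nr: "(norm v)^2 = 2 - 2 * r" using of_real_eq_iff by blast
  have "(norm v)^2 \<noteq> 0" using v0 by simp
  hence r1: "1 - r \<noteq> 0" using nr by auto
  have hv: "hc v = 1 / (1 - r)" using v0 r1 unfolding hc_def nr by (simp add: divide_simps)
  have "complex_of_real (hc v) * cinner v (axis j 1) = complex_of_real (1 / (1 - r) * (1 - r))"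
    unfolding c1 hv by simp
  also have "\<dots> = 1" using r1 by simp
  finally have "house v *v axis j 1 = axis j 1 - v" by (simp add: house_apply)
  thus ?thesis by (simp add: v_def)
qed

lemma col_diag:
  fixes X :: "complex^'n::finite^'n"
  assumes "X *v axis i 1 = z *s axis i 1"
  shows "\<forall>r. r \<noteq> i \<longrightarrow> X$r$i = 0"
proof -
  have "X$r$i = z * axis i 1 $ r" for r
    using arg_cong[OF assms, of "\<lambda>w. w $ r"] by (simp add: axis_col)
  thus ?thesis by (simp add: axis_def)
qed

lemma herm_entry:
  assumes "hermitian N" shows "N$i$r = cnj (N$r$i)"
proof -
  have "N$i$r = adj N $ i $ r" using assms by (simp add: hermitian_def)
  also have "\<dots> = cnj (N$r$i)" by (simp add: adj_def)
  finally show ?thesis .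
qed

lemma diag_partial:
  fixes M :: "complex^'n::finite^'n"
  assumes herm: "hermitian M" and fin: "finite K"
  shows "\<exists>U. unitary U \<and> (\<forall>i\<in>K. \<forall>r. r \<noteq> i \<longrightarrow> (adj U ** M ** U)$r$i = 0)"
  using fin
proof (induction K rule: finite_induct)
  case empty
  show ?case by (rule exI[of _ "mat 1"]) simp
next
  case (insert j K)
  from insert.IH obtain U where U: "unitary U"
    and dg: "\<forall>i\<in>K. \<forall>r. r \<noteq> i \<longrightarrow> (adj U ** M ** U)$r$i = 0"
    by blast
  define N where "N = adj U ** M ** U"
  have hN: "hermitian N" using herm unfolding N_def hermitian_def
    by (simp add: adj_mult matrix_mul_assoc)
  have inv: "\<forall>i\<in>K. (N *v v)$i = 0" if "\<forall>i\<in>K. v$i = 0" for v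
  proof
    fix i assume iK: "i \<in> K"
    have "N$i$r * v$r = 0" for r
    proof (cases "r = i")
      case True thus ?thesis using that iK by simp
    next
      case False
      hence "N$r$i = 0" using dg iK by (simp add: N_def)
      hence "N$i$r = 0" using herm_entry[OF hN, of i r] by simp
      thus ?thesis by simp
    qed
    hence "(\<Sum>r\<in>UNIV. N$i$r * v$r) = 0" by (intro sum.neutral) blast
    thus "(N *v v)$i = 0" by (simp add: matrix_vector_mult_def)
  qed
  obtain w lam where wW: "\<forall>i\<in>K. w$i = 0" and nw: "norm w = 1" and ev: "N *v w = lam *s w"
    using herm_eigvec_sub[OF hN insert.hyps(2)] inv by blast
  define ph where "ph = (if w$j = 0 then 1 else complex_of_real (cmod (w$j)) / w$j)"
  define y where "y = ph *s w"
  have nph: "cmod ph = 1" by (simp add: ph_def norm_divide)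
  have ny: "norm y = 1" by (simp add: y_def norm_scale_c nph nw)
  have yj: "y $ j = complex_of_real (cmod (w$j))" by (simp add: y_def ph_def)
  have yW: "\<forall>i\<in>K. y$i = 0" using wW by (simp add: y_def)
  have evy: "N *v y = lam *s y" by (simp add: y_def matvec_scale ev mult.commute)
  define v where "v = axis j 1 - y"
  define H where "H = house v"
  have HU: "unitary H" by (simp add: H_def house_unitary)
  have Hj: "H *v axis j 1 = y" unfolding H_def v_def by (rule house_map[OF ny yj])
  have Hy: "H *v y = axis j 1" using house_invol[of v "axis j 1"] Hj by (simp add: H_def)
  have Hi: "H *v axis i 1 = axis i 1" if "i \<in> K" for i
  proof -
    have "i \<noteq> j" using that insert.hyps(2) by auto
    hence "cinner v (axis i 1) = 0" using yW that unfolding v_def cinner_axis_right by (simp add: axis_def)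
    thus ?thesis unfolding H_def by (rule house_fix)
  qed
  define X where "X = H ** N ** H"
  have Xeq: "adj (U ** H) ** M ** (U ** H) = X"
    unfolding X_def N_def adj_mult H_def house_herm by (simp add: matrix_mul_assoc)
  have Xcol: "X *v axis i 1 = H *v (N *v (H *v axis i 1))" for i
    by (simp add: X_def matrix_vector_mul_assoc matrix_mul_assoc)
  have "\<forall>i\<in>insert j K. \<forall>r. r \<noteq> i \<longrightarrow> X$r$i = 0"
  proof
    fix i assume "i \<in> insert j K"
    then consider "i = j" | "i \<in> K" by auto
    then show "\<forall>r. r \<noteq> i \<longrightarrow> X$r$i = 0"
    proof cases
      case 1
      have "X *v axis i 1 = lam *s axis i 1"
        unfolding Xcol 1 Hj evy matvec_scale Hy ..
      thus ?thesis by (rule col_diag)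
    next
      case 2
      have "(N *v axis i 1)$r = (N$i$i *s axis i 1)$r" for r
        using dg 2 unfolding axis_col N_def[symmetric] by (cases "r = i") (auto simp: axis_def)
      hence Ne: "N *v axis i 1 = N$i$i *s axis i 1" by (simp add: vec_eq_iff)
      have "X *v axis i 1 = N$i$i *s axis i 1"
        unfolding Xcol Hi[OF 2] Ne matvec_scale Hi[OF 2] ..
      thus ?thesis by (rule col_diag)
    qed
  qed
  hence "\<forall>i\<in>insert j K. \<forall>r. r \<noteq> i \<longrightarrow> (adj (U ** H) ** M ** (U ** H))$r$i = 0"
    unfolding Xeq .
  with unitary_mult[OF U HU] show ?case by blast
qed

theorem spectral:
  fixes M :: "complex^'n::finite^'n"
  assumes herm: "hermitian M"
  shows "\<exists>U l. unitary U \<and> M = U ** diagm l ** adj U"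
proof -
  from diag_partial[OF herm finite] obtain U where
    UU: "unitary U \<and> (\<forall>i\<in>UNIV. \<forall>r. r \<noteq> i \<longrightarrow> (adj U ** M ** U)$r$i = 0)" ..
  have U: "unitary U" using UU by (rule conjunct1)
  have dg0: "\<forall>i\<in>UNIV. \<forall>r. r \<noteq> i \<longrightarrow> (adj U ** M ** U)$r$i = 0" using UU by (rule conjunct2)
  have dg: "\<forall>i. \<forall>r. r \<noteq> i \<longrightarrow> (adj U ** M ** U)$r$i = 0" using dg0 by simp
  define N where "N = adj U ** M ** U"
  have hN: "hermitian N" using herm unfolding N_def hermitian_def
    by (simp add: adj_mult matrix_mul_assoc)
  have real: "complex_of_real (Re (N$i$i)) = N$i$i" for i
  proof -
    have e: "N$i$i = cnj (N$i$i)" by (rule herm_entry[OF hN])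
    have "Im (N$i$i) = 0" using arg_cong[OF e, of Im] by simp
    thus ?thesis by (simp add: complex_eq_iff)
  qed
  define l where "l = (\<lambda>i. Re (N$i$i))"
  have "N$r$i = diagm l $ r $ i" for r i
    using dg real[of i] unfolding N_def[symmetric] by (cases "r = i") (auto simp: diagm_def l_def)
  hence ND: "N = diagm l" by (simp add: vec_eq_iff)
  have "U ** N ** adj U = (U ** adj U) ** M ** (U ** adj U)"
    unfolding N_def by (simp add: matrix_mul_assoc)
  also have "\<dots> = M" using U unfolding unitary_def by simp
  finally have "M = U ** diagm l ** adj U" unfolding ND by simp
  thus ?thesis using U by blast
qed

lemma decomp_qform:
  assumes "unitary U"
  shows "cinner x ((U ** diagm l ** adj U) *v x) = (\<Sum>i\<in>UNIV. complex_of_real (l i) * complex_of_real ((cmod ((adj U *v x)$i))^2))"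
proof -
  define z where "z = adj U *v x"
  have "cinner x ((U ** diagm l ** adj U) *v x) = cinner x (U *v (diagm l *v z))"
    by (simp add: z_def matrix_vector_mul_assoc matrix_mul_assoc)
  also have "\<dots> = cinner z (diagm l *v z)"
    using cinner_adj[of x "adj U"] by (simp add: z_def)
  also have "\<dots> = (\<Sum>i\<in>UNIV. complex_of_real (l i) * (cnj (z$i) * z$i))"
    by (simp add: cinner_def matrix_vector_mult_def diagm_def if_distrib if_distribR algebra_simps cong: if_cong)
  moreover have "cnj w * w = (complex_of_real (cmod w))^2" for w
  proof -
    have "complex_of_real ((cmod w)^2) = w * cnj w" by (rule complex_norm_square)
    thus ?thesis by (metis mult.commute of_real_power)
  qed
  ultimately show ?thesis by (simp add: z_def)
qed

lemma decomp_herm: "hermitian (U ** diagm l ** adj U)"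
  by (simp add: hermitian_def adj_mult matrix_mul_assoc)

lemma decomp_psd:
  assumes U: "unitary U" and l: "\<And>i. 0 \<le> l i"
  shows "psd (U ** diagm l ** adj U)"
  unfolding psd_iff
proof (intro conjI allI decomp_herm)
  fix x
  show "0 \<le> Re (cinner x ((U ** diagm l ** adj U) *v x))"
    unfolding decomp_qform[OF U]
    by (simp add: sum_nonneg l del: of_real_power)
qed

theorem spectral_psd:
  fixes M :: "complex^'n::finite^'n"
  assumes psd: "psd M"
  shows "\<exists>U l. unitary U \<and> M = U ** diagm l ** adj U \<and> (\<forall>i. 0 \<le> l i)"
proof -
  from psd have herm: "hermitian M" by (simp add: psd_def)
  obtain U l where U: "unitary U" and M: "M = U ** diagm l ** adj U"
    using spectral[OF herm] by blast
  have "0 \<le> l i" for i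
  proof -
    have "0 \<le> Re (cinner (U *v axis i 1) (M *v (U *v axis i 1)))"
      using psd by (simp add: psd_iff)
    also have "cinner (U *v axis i 1) (M *v (U *v axis i 1)) = cinner (axis i 1) ((adj U ** M ** U) *v axis i 1)"
    proof -
      have "(adj U ** M ** U) *v axis i 1 = adj U *v (M *v (U *v axis i 1))"
        by (simp add: matrix_vector_mul_assoc matrix_mul_assoc)
      thus ?thesis by (simp only: cinner_adj)
    qed
    also have "adj U ** M ** U = diagm l"
      using U unfolding M unitary_def
      by (metis matrix_mul_assoc matrix_mul_lid matrix_mul_rid)
    finally show ?thesis by (simp add: cinner_axis_left axis_col diagm_def)
  qed
  thus ?thesis using U M by blast
qed

lemma sum_pair: "(\<Sum>x\<in>(UNIV::('a::finite \<times> 'b::finite) set). f x) = (\<Sum>a\<in>UNIV. \<Sum>b\<in>UNIV. f (a, b))"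
proof -
  have "(\<Sum>a\<in>UNIV. \<Sum>b\<in>UNIV. f (a, b)) = (\<Sum>(a, b)\<in>UNIV \<times> UNIV. f (a, b))"
    by (rule sum.cartesian_product)
  thus ?thesis by (simp add: UNIV_Times_UNIV)
qed

lemma sum_triple: "(\<Sum>x\<in>(UNIV::('a::finite \<times> 'b::finite \<times> 'c::finite) set). f x) = (\<Sum>b\<in>UNIV. \<Sum>a\<in>UNIV. \<Sum>c\<in>UNIV. f (a, b, c))"
  unfolding sum_pair by (rule sum.swap)

definition blk :: "('b::finite \<Rightarrow> ('a::finite \<times> 'c::finite) cmat) \<Rightarrow> ('a \<times> 'b \<times> 'c) cmat" where
  "blk F = (\<chi> x y. case x of (a, b, c) \<Rightarrow> case y of (a', b', c') \<Rightarrow>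
      if b = b' then F b $ (a, c) $ (a', c') else 0)"

lemma blk_entry: "blk F $ (a, b, c) $ (a', b', c') = (if b = b' then F b $ (a, c) $ (a', c') else 0)"
  by (simp add: blk_def)

lemma blk_mult: "blk F ** blk G = blk (\<lambda>b. F b ** G b)"
proof -
  have "(blk F ** blk G) $ (a, b, c) $ (a', b', c') = blk (\<lambda>b. F b ** G b) $ (a, b, c) $ (a', b', c')"
    for a b c a' b' c'
  proof -
    have "(blk F ** blk G) $ (a, b, c) $ (a', b', c') =
       (\<Sum>b2\<in>UNIV. \<Sum>a2\<in>UNIV. \<Sum>c2\<in>UNIV. blk F $ (a, b, c) $ (a2, b2, c2) * blk G $ (a2, b2, c2) $ (a', b', c'))"
      by (simp add: matrix_matrix_mult_def sum_triple)
    also have "\<dots> = (\<Sum>b2\<in>UNIV. if b2 = b then (\<Sum>a2\<in>UNIV. \<Sum>c2\<in>UNIV. F b $ (a, c) $ (a2, c2) * blk G $ (a2, b, c2) $ (a', b', c')) else 0)"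
      by (intro sum.cong refl) (auto simp: blk_entry)
    also have "\<dots> = (\<Sum>a2\<in>UNIV. \<Sum>c2\<in>UNIV. F b $ (a, c) $ (a2, c2) * blk G $ (a2, b, c2) $ (a', b', c'))"
      by simp
    also have "\<dots> = (if b = b' then (\<Sum>a2\<in>UNIV. \<Sum>c2\<in>UNIV. F b $ (a, c) $ (a2, c2) * G b $ (a2, c2) $ (a', c')) else 0)"
      by (simp add: blk_entry)
    also have "\<dots> = blk (\<lambda>b. F b ** G b) $ (a, b, c) $ (a', b', c')"
      by (simp add: blk_entry matrix_matrix_mult_def sum_pair)
    finally show ?thesis .
  qed
  thus ?thesis by (simp add: vec_eq_iff split_paired_all)
qed

lemma blk_adj: "adj (blk F) = blk (\<lambda>b. adj (F b))"
  by (simp add: vec_eq_iff split_paired_all blk_entry adj_def)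

lemma blk_mat1: "blk (\<lambda>b. mat 1) = mat 1"
  by (simp add: vec_eq_iff split_paired_all blk_entry mat_def)

lemma blk_diagm: "blk (\<lambda>b. diagm (l b)) = diagm (\<lambda>(a, b, c). l b (a, c))"
  by (simp add: vec_eq_iff split_paired_all blk_entry diagm_def)

lemma blk_unitary: "(\<And>b. unitary (F b)) \<Longrightarrow> unitary (blk F)"
  by (simp add: unitary_def blk_adj blk_mult blk_mat1)

lemma blk_trace: "mtrace (blk F) = (\<Sum>b\<in>UNIV. mtrace (F b))"
  by (simp add: mtrace_def sum_triple blk_entry sum_pair)

lemma blk_decomp: "blk (\<lambda>b. U b ** diagm (g b) ** adj (U b)) = blk U ** diagm (\<lambda>(a, b, c). g b (a, c)) ** adj (blk U)"
  unfolding blk_diagm[symmetric] blk_adj blk_mult ..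

lemma mat_fun_blk:
  assumes "\<And>b. hermitian (F b)"
  shows "mat_fun f (blk F) = blk (\<lambda>b. mat_fun f (F b))"
proof -
  have "\<forall>b. \<exists>U l. unitary U \<and> F b = U ** diagm l ** adj U"
    using spectral[OF assms] by blast
  hence "\<forall>b. \<exists>Ul. unitary (fst Ul) \<and> F b = fst Ul ** diagm (snd Ul) ** adj (fst Ul)" by simp
  from choice[OF this] obtain Ul where
    Ul: "\<forall>b. unitary (fst (Ul b)) \<and> F b = fst (Ul b) ** diagm (snd (Ul b)) ** adj (fst (Ul b))" ..
  define U where "U = (\<lambda>b. fst (Ul b))"
  define l where "l = (\<lambda>b. snd (Ul b))"
  have U: "\<And>b. unitary (U b)" and F: "\<And>b. F b = U b ** diagm (l b) ** adj (U b)"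
    using Ul by (simp_all add: U_def l_def)
  define L where "L = (\<lambda>(a, b, c). l b (a, c))"
  have BF: "blk F = blk U ** diagm L ** adj (blk U)"
    unfolding L_def F by (rule blk_decomp)
  have "mat_fun f (blk F) = blk U ** diagm (f \<circ> L) ** adj (blk U)"
    by (rule mat_fun_eq[OF blk_unitary[OF U] BF])
  also have "f \<circ> L = (\<lambda>(a, b, c). (f \<circ> l b) (a, c))"
    by (auto simp: L_def fun_eq_iff)
  also have "blk U ** diagm \<dots> ** adj (blk U) = blk (\<lambda>b. U b ** diagm (f \<circ> l b) ** adj (U b))"
    by (rule blk_decomp[symmetric])
  also have "\<dots> = blk (\<lambda>b. mat_fun f (F b))"
    using mat_fun_eq[OF U F] by simp
  finally show ?thesis .
qed

definition smat :: "real \<Rightarrow> ('n::finite) cmat \<Rightarrow> 'n cmat" where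
  "smat c M = (\<chi> i j. complex_of_real c * M$i$j)"

lemma smat_entry: "smat c M $ i $ j = complex_of_real c * M$i$j"
  by (simp add: smat_def)

lemma smat_mult_left: "smat c A ** B = smat c (A ** B)"
  by (simp add: vec_eq_iff smat_entry matrix_matrix_mult_def sum_distrib_left mult.assoc)

lemma smat_mult_right: "A ** smat c B = smat c (A ** B)"
  by (simp add: vec_eq_iff smat_entry matrix_matrix_mult_def sum_distrib_left mult.left_commute)

lemma smat_smat: "smat c (smat d A) = smat (c * d) A"
  by (simp add: vec_eq_iff smat_entry mult.assoc)

lemma adj_smat: "adj (smat c A) = smat c (adj A)"
  by (simp add: vec_eq_iff smat_entry adj_def)

lemma smat_diagm: "smat c (diagm l) = diagm (\<lambda>i. c * l i)"
  by (simp add: vec_eq_iff smat_entry diagm_def)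

lemma smat_zero_coeff: "smat 0 A = 0"
  by (simp add: vec_eq_iff smat_entry)

lemma mtrace_smat: "mtrace (smat c A) = complex_of_real c * mtrace A"
  by (simp add: mtrace_def smat_entry sum_distrib_left)

lemma decomp_smat: "smat c (U ** diagm l ** adj U) = U ** diagm (\<lambda>i. c * l i) ** adj U"
  by (simp add: smat_mult_left smat_mult_right smat_diagm[symmetric])

lemma mpow_decomp:
  assumes "unitary U" "M = U ** diagm l ** adj U"
  shows "mpow M x = U ** diagm (\<lambda>i. l i powr x) ** adj U"
  unfolding mpow_def using mat_fun_eq[OF assms] by (simp add: comp_def)

lemma mpow_herm: "hermitian M \<Longrightarrow> hermitian (mpow M x)"
  using spectral[of M] mpow_decomp decomp_herm by metis

lemma herm_smat: "hermitian M \<Longrightarrow> hermitian (smat c M)"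
  by (simp add: hermitian_def adj_smat)

lemma mpow_smat:
  assumes psd: "psd M" and c: "0 \<le> c"
  shows "mpow (smat c M) x = smat (c powr x) (mpow M x)"
proof -
  obtain U l where U: "unitary U" and M: "M = U ** diagm l ** adj U" and l: "\<And>i. 0 \<le> l i"
    using spectral_psd[OF psd] by blast
  have "smat c M = U ** diagm (\<lambda>i. c * l i) ** adj U" unfolding M by (rule decomp_smat)
  hence "mpow (smat c M) x = U ** diagm (\<lambda>i. (c * l i) powr x) ** adj U"
    by (rule mpow_decomp[OF U])
  also have "(\<lambda>i. (c * l i) powr x) = (\<lambda>i. c powr x * l i powr x)"
    using c l by (simp add: powr_mult)
  also have "U ** diagm \<dots> ** adj U = smat (c powr x) (U ** diagm (\<lambda>i. l i powr x) ** adj U)"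
    by (rule decomp_smat[symmetric])
  also have "U ** diagm (\<lambda>i. l i powr x) ** adj U = mpow M x"
    by (rule mpow_decomp[OF U M, symmetric])
  finally show ?thesis .
qed

lemma mtrace_comm: "mtrace (A ** B) = mtrace (B ** A)"
  unfolding mtrace_def matrix_matrix_mult_def
  by (simp add: mult.commute) (rule sum.swap)

lemma mtrace_decomp:
  assumes "unitary U"
  shows "mtrace (U ** diagm l ** adj U) = (\<Sum>i\<in>UNIV. complex_of_real (l i))"
proof -
  have "mtrace (U ** diagm l ** adj U) = mtrace (diagm l ** adj U ** U)"
    by (metis mtrace_comm matrix_mul_assoc)
  also have "\<dots> = mtrace (diagm l)"
    using assms by (simp add: unitary_def flip: matrix_mul_assoc)
  finally show ?thesis by (simp add: mtrace_def diagm_def)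
qed

lemma mtrace_unitary_conj:
  assumes "unitary U"
  shows "mtrace (adj U ** R ** U) = mtrace R"
proof -
  have "mtrace (adj U ** R ** U) = mtrace (U ** (adj U ** R))"
    by (rule mtrace_comm)
  also have "\<dots> = mtrace R" using assms by (simp add: unitary_def matrix_mul_assoc)
  finally show ?thesis .
qed

lemma psd_sandwich:
  assumes R: "psd R" and S: "hermitian S"
  shows "psd (S ** R ** S)"
  unfolding psd_iff
proof (intro conjI allI)
  show "hermitian (S ** R ** S)"
    using R S by (simp add: psd_def hermitian_def adj_mult matrix_mul_assoc)
  fix v
  have "cinner v ((S ** R ** S) *v v) = cinner (S *v v) (R *v (S *v v))"
    by (simp add: matrix_vector_mul_assoc[symmetric] herm_cinner[OF S])
  thus "0 \<le> Re (cinner v ((S ** R ** S) *v v))" using R by (simp add: psd_iff)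
qed

lemma mtrace_mpow_pos:
  assumes Y: "psd Y" and Y0: "Y \<noteq> 0"
  shows "0 < Re (mtrace (mpow Y a))"
proof -
  obtain U l where U: "unitary U" and M: "Y = U ** diagm l ** adj U" and l: "\<And>i. 0 \<le> l i"
    using spectral_psd[OF Y] by blast
  have "\<exists>i. l i \<noteq> 0"
  proof (rule ccontr)
    assume "\<not> ?thesis"
    hence "diagm l = 0" by (simp add: vec_eq_iff diagm_def)
    hence "Y = 0" using M by simp
    thus False using Y0 by simp
  qed
  then obtain i where li: "0 < l i" using l by (metis order_le_less)
  have "Re (mtrace (mpow Y a)) = (\<Sum>j\<in>UNIV. l j powr a)"
    unfolding mpow_decomp[OF U M] mtrace_decomp[OF U] by simp
  also have "\<dots> \<ge> l i powr a"
    by (rule member_le_sum) auto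
  finally show ?thesis using li by (smt (verit) powr_gt_zero)
qed

lemma unitary_simps:
  assumes "unitary U"
  shows "adj U ** U = mat 1" "U ** adj U = mat 1" "X ** adj U ** U = X" "X ** U ** adj U = X"
  using assms unfolding unitary_def by (simp_all flip: matrix_mul_assoc)

lemma kron_entry: "kron X Y $ (a, c) $ (a', c') = X$a$a' * Y$c$c'"
  by (simp add: kron_def)

lemma kron_mult: "kron A B ** kron C D = kron (A ** C) (B ** D)"
proof -
  have "(kron A B ** kron C D) $ (a, c) $ (a', c') = kron (A ** C) (B ** D) $ (a, c) $ (a', c')" for a c a' c'
  proof -
    have "(kron A B ** kron C D) $ (a, c) $ (a', c') =
        (\<Sum>a2\<in>UNIV. \<Sum>c2\<in>UNIV. (A$a$a2 * C$a2$a') * (B$c$c2 * D$c2$c'))"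
      by (simp add: matrix_matrix_mult_def sum_pair kron_entry mult_ac)
    also have "\<dots> = (\<Sum>a2\<in>UNIV. A$a$a2 * C$a2$a') * (\<Sum>c2\<in>UNIV. B$c$c2 * D$c2$c')"
      by (simp add: sum_product)
    finally show ?thesis by (simp add: kron_entry matrix_matrix_mult_def)
  qed
  thus ?thesis by (simp add: vec_eq_iff split_paired_all)
qed

lemma kron_adj: "adj (kron A B) = kron (adj A) (adj B)"
  by (simp add: vec_eq_iff split_paired_all kron_entry adj_def)

lemma kron_mat1: "kron (mat 1) (mat 1) = mat 1"
  by (simp add: vec_eq_iff split_paired_all kron_entry mat_def)

lemma kron_diagm1: "kron (mat 1 :: ('a::finite) cmat) (diagm m) = diagm (\<lambda>(a::'a, c). m c)"
  by (simp add: vec_eq_iff split_paired_all kron_entry mat_def diagm_def)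

lemma kron_unitary: "unitary V \<Longrightarrow> unitary (kron (mat 1 :: ('a::finite) cmat) V)"
  by (simp add: unitary_def kron_adj kron_mult kron_mat1)

lemma kron1_decomp:
  "kron (mat 1 :: ('a::finite) cmat) (V ** diagm m ** adj V) =
     kron (mat 1 :: 'a cmat) V ** diagm (\<lambda>(a::'a, c). m c) ** adj (kron (mat 1 :: 'a cmat) V)"
  by (simp add: kron_adj kron_mult kron_diagm1[symmetric])

lemma sandwich_entry: "(adj X ** R ** Y) $ i $ j = (\<Sum>k\<in>UNIV. \<Sum>l\<in>UNIV. cnj (X$k$i) * R$k$l * Y$l$j)"
  by (simp add: matrix_matrix_mult_def adj_def sum_distrib_left sum_distrib_right mult_ac)
    (rule sum.swap)

lemma if_mult0: "(if P then x else 0) * z = (if P then x * z else (0::complex))" by simp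
lemma mult_if0: "z * (if P then x else 0) = (if P then z * x else (0::complex))" by simp
lemma sum_if0: "(\<Sum>i\<in>A. if P then f i else 0) = (if P then sum f A else (0::complex))" by simp

lemma kron1_entry: "kron (mat 1) A $ (a, c) $ (a', c') = (if a = a' then A$c$c' else 0)"
  by (simp add: kron_entry mat_def)

lemma ptrace_left: "ptrace1 (kron (mat 1 :: ('a::finite) cmat) A ** R) = A ** ptrace1 R"
proof -
  have "ptrace1 (kron (mat 1 :: 'a cmat) A ** R) $ c $ c' = (A ** ptrace1 R) $ c $ c'" for c c'
  proof -
    have "ptrace1 (kron (mat 1 :: 'a cmat) A ** R) $ c $ c' = (\<Sum>a\<in>UNIV. \<Sum>c2\<in>UNIV. A$c$c2 * R$(a,c2)$(a,c'))"
      by (simp add: ptrace1_def matrix_matrix_mult_def sum_pair kron1_entry if_mult0 sum_if0)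
    also have "\<dots> = (\<Sum>c2\<in>UNIV. \<Sum>a\<in>UNIV. A$c$c2 * R$(a,c2)$(a,c'))" by (rule sum.swap)
    also have "\<dots> = (A ** ptrace1 R) $ c $ c'"
      by (simp add: ptrace1_def matrix_matrix_mult_def sum_distrib_left)
    finally show ?thesis .
  qed
  thus ?thesis by (simp add: vec_eq_iff)
qed

lemma ptrace_right: "ptrace1 (R ** kron (mat 1 :: ('a::finite) cmat) B) = ptrace1 R ** B"
proof -
  have "ptrace1 (R ** kron (mat 1 :: 'a cmat) B) $ c $ c' = (ptrace1 R ** B) $ c $ c'" for c c'
  proof -
    have "ptrace1 (R ** kron (mat 1 :: 'a cmat) B) $ c $ c' = (\<Sum>a\<in>UNIV. \<Sum>c2\<in>UNIV. R$(a,c)$(a,c2) * B$c2$c')"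
    proof -
      have "(\<Sum>x\<in>UNIV. R $ (a, c) $ x * kron (mat 1 :: 'a cmat) B $ x $ (a, c')) = (\<Sum>c2\<in>UNIV. R$(a,c)$(a,c2) * B$c2$c')" for a
      proof -
        have "(\<Sum>x\<in>UNIV. R $ (a, c) $ x * kron (mat 1 :: 'a cmat) B $ x $ (a, c')) =
            (\<Sum>a2\<in>UNIV. \<Sum>c2\<in>UNIV. if a2 = a then R$(a2,c)$(a2,c2) * B$c2$c' else 0)"
          unfolding sum_pair by (intro sum.cong refl) (simp add: kron1_entry)
        thus ?thesis by (simp add: sum_if0)
      qed
      thus ?thesis by (simp add: ptrace1_def matrix_matrix_mult_def)
    qed
    also have "\<dots> = (\<Sum>c2\<in>UNIV. \<Sum>a\<in>UNIV. R$(a,c)$(a,c2) * B$c2$c')" by (rule sum.swap)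
    also have "\<dots> = (ptrace1 R ** B) $ c $ c'"
      by (simp add: ptrace1_def matrix_matrix_mult_def sum_distrib_right)
    finally show ?thesis .
  qed
  thus ?thesis by (simp add: vec_eq_iff)
qed

lemma ptrace_conj:
  fixes R :: "('a::finite \<times> 'c::finite) cmat"
  shows "ptrace1 (adj (kron (mat 1 :: 'a cmat) V) ** R ** kron (mat 1 :: 'a cmat) V) = adj V ** ptrace1 R ** V"
  by (simp add: kron_adj ptrace_left ptrace_right)

lemma psd_conj:
  assumes R: "psd R"
  shows "psd (adj X ** R ** X)"
  unfolding psd_iff
proof (intro conjI allI)
  show "hermitian (adj X ** R ** X)"
    using R by (simp add: psd_def hermitian_def adj_mult matrix_mul_assoc)
  fix v
  have "cinner v ((adj X ** R ** X) *v v) = cinner (X *v v) (R *v (X *v v))"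
    by (simp add: matrix_vector_mul_assoc[symmetric] cinner_adj)
  thus "0 \<le> Re (cinner v ((adj X ** R ** X) *v v))" using R by (simp add: psd_iff)
qed

lemma psd_diag:
  assumes P: "psd P"
  shows "complex_of_real (Re (P$i$i)) = P$i$i" "0 \<le> Re (P$i$i)"
proof -
  have hP: "hermitian P" using P by (simp add: psd_def)
  have e: "P$i$i = cnj (P$i$i)" by (rule herm_entry[OF hP])
  have "Im (P$i$i) = 0" using arg_cong[OF e, of Im] by simp
  thus "complex_of_real (Re (P$i$i)) = P$i$i" by (simp add: complex_eq_iff)
  have "0 \<le> Re (cinner (axis i 1) (P *v axis i 1))" using P by (simp add: psd_iff)
  thus "0 \<le> Re (P$i$i)" unfolding cinner_axis_left axis_col .
qed

lemma psd_zero_diag: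
  assumes P: "psd P" and z: "P$i$i = 0"
  shows "P$j$i = 0" "P$i$j = 0"
proof -
  have hP: "hermitian P" using P by (simp add: psd_def)
  have "cinner (P *v axis i 1) (P *v axis i 1) = 0"
  proof (rule form_zero_orth[OF hP, of UNIV])
    show "0 \<le> Re (cinner u (P *v u))" for u using P by (simp add: psd_iff)
    show "Re (cinner (axis i 1) (P *v axis i 1)) = 0"
      unfolding cinner_axis_left axis_col z by simp
  qed auto
  hence "P *v axis i 1 = 0" by (simp add: cinner_self_eq0)
  thus j: "P$j$i = 0" using axis_col[of P i j] by simp
  show "P$i$j = 0" using herm_entry[OF hP, of i j] j by simp
qed

lemma herm_ptrace: "hermitian R \<Longrightarrow> hermitian (ptrace1 R)"
  unfolding hermitian_def
  by (simp add: vec_eq_iff adj_def ptrace1_def)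

lemma diagm_vec_entry: "(diagm l *v v) $ i = complex_of_real (l i) * v $ i"
  by (simp add: matrix_vector_mult_def diagm_def if_mult0 sum_if0 cong: if_cong)


lemma supp_main:
  fixes R :: "('a::finite \<times> 'c::finite) cmat"
  assumes R: "psd R" and tr: "mtrace R = 1"
  shows "supp R \<subseteq> supp (kron (mat 1 :: 'a cmat) (ptrace1 R))"
    and "psd (kron (mat 1 :: 'a cmat) (ptrace1 R))"
    and "mpow (kron (mat 1 :: 'a cmat) (ptrace1 R)) x ** R ** mpow (kron (mat 1 :: 'a cmat) (ptrace1 R)) x \<noteq> 0"
proof -
  have hR: "hermitian R" using R by (simp add: psd_def)
  obtain V \<mu> where V: "unitary V" and PR: "ptrace1 R = V ** diagm \<mu> ** adj V"
    using spectral[OF herm_ptrace[OF hR]] by blast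
  define Z where "Z = kron (mat 1 :: 'a cmat) V"
  define m where "m = (\<lambda>(a::'a, c). \<mu> c)"
  define K where "K = kron (mat 1 :: 'a cmat) (ptrace1 R)"
  have Zu: "unitary Z" unfolding Z_def by (rule kron_unitary[OF V])
  have KZ: "K = Z ** diagm m ** adj Z"
    unfolding K_def PR Z_def m_def by (rule kron1_decomp)
  define R' where "R' = adj Z ** R ** Z"
  have pR': "psd R'" unfolding R'_def by (rule psd_conj[OF R])
  have PR': "ptrace1 R' = diagm \<mu>"
    unfolding R'_def Z_def ptrace_conj PR
    by (simp add: matrix_mul_assoc unitary_simps[OF V])
  have mu_sum: "\<mu> k = (\<Sum>a\<in>UNIV. Re (R'$(a,k)$(a,k)))" for k
  proof -
    have "complex_of_real (\<mu> k) = ptrace1 R' $ k $ k" unfolding PR' by (simp add: diagm_def)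
    also have "\<dots> = (\<Sum>a\<in>UNIV. R'$(a,k)$(a,k))" by (simp add: ptrace1_def)
    finally have "Re (complex_of_real (\<mu> k)) = Re (\<Sum>a\<in>UNIV. R'$(a,k)$(a,k))" by simp
    thus ?thesis by (simp add: Re_sum)
  qed
  have mu0: "0 \<le> \<mu> k" for k unfolding mu_sum by (intro sum_nonneg psd_diag(2)[OF pR'])
  have zero: "R'$(a,k)$(a,k) = 0" if "\<mu> k = 0" for a k
  proof -
    have "(\<Sum>a\<in>UNIV. Re (R'$(a,k)$(a,k))) = 0" using that mu_sum by simp
    hence "Re (R'$(a,k)$(a,k)) = 0"
      using sum_nonneg_eq_0_iff[of UNIV "\<lambda>a. Re (R'$(a,k)$(a,k))"] psd_diag(2)[OF pR'] by simp
    thus ?thesis using psd_diag(1)[OF pR', of "(a,k)"] by simp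
  qed
  have m0: "0 \<le> m i" for i by (simp add: m_def mu0 split: prod.splits)
  show pK: "psd (kron (mat 1 :: 'a cmat) (ptrace1 R))"
    unfolding K_def[symmetric] KZ by (rule decomp_psd[OF Zu m0])
  show "supp R \<subseteq> supp (kron (mat 1 :: 'a cmat) (ptrace1 R))"
  proof
    fix y assume "y \<in> supp R"
    then obtain u where y: "y = R *v u" by (auto simp: supp_def)
    define d where "d = adj Z *v y"
    have "adj Z ** R = R' ** adj Z" unfolding R'_def by (simp add: matrix_mul_assoc unitary_simps[OF Zu])
    hence d2: "d = R' *v (adj Z *v u)" unfolding d_def y by (simp add: matrix_vector_mul_assoc)
    have dz: "d $ (a,k) = 0" if "\<mu> k = 0" for a k
      unfolding d2 matrix_vector_mult_def using psd_zero_diag(2)[OF pR' zero[OF that]] by simp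
    define \<nu> where "\<nu> = (\<lambda>(a::'a, k). if \<mu> k = 0 then 0 else 1 / \<mu> k)"
    define w where "w = Z *v (diagm \<nu> *v d)"
    have dd: "diagm m *v (diagm \<nu> *v d) = d"
    proof -
      have "(diagm m *v (diagm \<nu> *v d)) $ (a, k) = d $ (a, k)" for a k
        using dz[of k a] by (cases "\<mu> k = 0") (auto simp: diagm_vec_entry m_def \<nu>_def)
      thus ?thesis by (simp add: vec_eq_iff split_paired_all)
    qed
    have "K *v w = Z *v (diagm m *v (diagm \<nu> *v d))"
      unfolding KZ w_def by (simp add: matrix_vector_mul_assoc matrix_mul_assoc unitary_simps[OF Zu])
    also have "\<dots> = Z *v d" unfolding dd ..
    also have "\<dots> = y" unfolding d_def by (simp add: matrix_vector_mul_assoc unitary_simps[OF Zu])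
    finally show "y \<in> supp (kron (mat 1 :: 'a cmat) (ptrace1 R))"
      unfolding K_def supp_def by (metis rangeI)
  qed
  show "mpow (kron (mat 1 :: 'a cmat) (ptrace1 R)) x ** R ** mpow (kron (mat 1 :: 'a cmat) (ptrace1 R)) x \<noteq> 0"
  proof
    define mx where "mx = (\<lambda>i. m i powr x)"
    have S: "mpow K x = Z ** diagm mx ** adj Z" unfolding mx_def by (rule mpow_decomp[OF Zu KZ])
    assume "mpow (kron (mat 1 :: 'a cmat) (ptrace1 R)) x ** R ** mpow (kron (mat 1 :: 'a cmat) (ptrace1 R)) x = 0"
    hence "mpow K x ** R ** mpow K x = 0" unfolding K_def .
    hence "adj Z ** (mpow K x ** R ** mpow K x) ** Z = 0" by simp
    moreover have "adj Z ** (mpow K x ** R ** mpow K x) ** Z = diagm mx ** R' ** diagm mx"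
      unfolding S R'_def by (simp add: matrix_mul_assoc unitary_simps[OF Zu])
    ultimately have E: "diagm mx ** R' ** diagm mx = 0" by simp
    have diag0: "R' $ i $ i = 0" for i
    proof -
      obtain a k where i: "i = (a, k)" by (cases i)
      show ?thesis
      proof (cases "\<mu> k = 0")
        case True thus ?thesis using zero i by simp
      next
        case False
        hence "0 < \<mu> k" using mu0[of k] by simp
        hence "0 < mx i" by (simp add: mx_def m_def i)
        moreover have "complex_of_real (mx i) * R' $ i $ i * complex_of_real (mx i) = 0"
          using arg_cong[OF E, of "\<lambda>X. X $ i $ i"] by simp
        ultimately show ?thesis by simp
      qed
    qed
    have "mtrace R' = 0" by (simp add: mtrace_def diag0)
    moreover have "mtrace R' = 1" unfolding R'_def mtrace_unitary_conj[OF Zu] by (rule tr)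
    ultimately show False by simp
  qed
qed

lemma jensen_part:
  fixes a q :: "'b::finite \<Rightarrow> real" and \<alpha> :: real
  assumes al: "1 < \<alpha>" and q0: "\<And>b. 0 \<le> q b" and q1: "(\<Sum>b\<in>UNIV. q b) = 1"
    and a0: "\<And>b. 0 \<le> a b" and aq: "\<And>b. 0 < a b \<Longrightarrow> 0 < q b" and ex: "\<exists>b. 0 < a b"
  shows "(\<Sum>b\<in>UNIV. a b) powr \<alpha> \<le> (\<Sum>b\<in>UNIV. if 0 < a b then q b powr (1 - \<alpha>) * a b powr \<alpha> else 0)"
proof -
  define P where "P = {b. 0 < a b}"
  have Pne: "P \<noteq> {}" using ex by (auto simp: P_def)
  have finP: "finite P" by simp
  define Qs where "Qs = (\<Sum>b\<in>P. q b)"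
  have Qs0: "0 < Qs" unfolding Qs_def
    using Pne aq by (intro sum_pos) (auto simp: P_def)
  have Qs1: "Qs \<le> 1" unfolding Qs_def q1[symmetric] by (rule sum_mono2) (auto simp: q0)
  have Tsum: "(\<Sum>b\<in>UNIV. a b) = (\<Sum>b\<in>P. a b)"
  proof (rule sum.mono_neutral_right)
    show "\<forall>i\<in>UNIV - P. a i = 0"
    proof
      fix i assume "i \<in> UNIV - P"
      hence "\<not> 0 < a i" by (simp add: P_def)
      thus "a i = 0" using a0[of i] by simp
    qed
  qed auto
  have Ssum: "(\<Sum>b\<in>UNIV. if 0 < a b then q b powr (1 - \<alpha>) * a b powr \<alpha> else 0) =
      (\<Sum>b\<in>P. q b powr (1 - \<alpha>) * a b powr \<alpha>)"
    unfolding P_def using sum.inter_filter[of UNIV "\<lambda>b. q b powr (1 - \<alpha>) * a b powr \<alpha>" "\<lambda>b. 0 < a b"] by simp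
  define T where "T = (\<Sum>b\<in>P. a b)"
  have cvx: "convex_on {0<..} (\<lambda>x::real. x powr \<alpha>)" using al by (intro powr_convex) simp
  have J: "(\<Sum>b\<in>P. (q b / Qs) *\<^sub>R (a b / q b)) powr \<alpha> \<le> (\<Sum>b\<in>P. (q b / Qs) * (a b / q b) powr \<alpha>)"
  proof (rule convex_on_sum[OF finP Pne cvx])
    show "(\<Sum>i\<in>P. q i / Qs) = 1" using Qs0 by (simp add: Qs_def sum_divide_distrib[symmetric])
    show "0 \<le> q i / Qs" if "i \<in> P" for i using Qs0 q0[of i] by simp
    show "a i / q i \<in> {0<..}" if "i \<in> P" for i using that aq by (auto simp: P_def)
  qed
  have L: "(\<Sum>b\<in>P. (q b / Qs) *\<^sub>R (a b / q b)) = T / Qs"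
    unfolding T_def sum_divide_distrib
  proof (intro sum.cong refl)
    fix b assume "b \<in> P"
    hence "0 < q b" using aq by (simp add: P_def)
    thus "(q b / Qs) *\<^sub>R (a b / q b) = a b / Qs" by simp
  qed
  have R: "(q b / Qs) * (a b / q b) powr \<alpha> = (q b powr (1 - \<alpha>) * a b powr \<alpha>) / Qs" if "b \<in> P" for b
  proof -
    have qb: "0 < q b" and ab: "0 < a b" using that aq by (auto simp: P_def)
    have "(a b / q b) powr \<alpha> = a b powr \<alpha> / q b powr \<alpha>" using qb ab by (simp add: powr_divide)
    moreover have "q b powr (1 - \<alpha>) = q b / q b powr \<alpha>"
      using qb by (simp add: powr_diff)
    ultimately show ?thesis by (simp add: field_simps)
  qed
  have "(T / Qs) powr \<alpha> \<le> (\<Sum>b\<in>P. q b powr (1 - \<alpha>) * a b powr \<alpha>) / Qs"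
  proof -
    have "(\<Sum>b\<in>P. (q b / Qs) * (a b / q b) powr \<alpha>) = (\<Sum>b\<in>P. q b powr (1 - \<alpha>) * a b powr \<alpha>) / Qs"
      unfolding sum_divide_distrib by (rule sum.cong[OF refl R])
    thus ?thesis using J unfolding L by simp
  qed
  hence "T powr \<alpha> / Qs powr \<alpha> \<le> (\<Sum>b\<in>P. q b powr (1 - \<alpha>) * a b powr \<alpha>) / Qs"
    using Qs0 by (simp add: powr_divide T_def sum_nonneg a0)
  hence "T powr \<alpha> \<le> (\<Sum>b\<in>P. q b powr (1 - \<alpha>) * a b powr \<alpha>) * (Qs powr \<alpha> / Qs)"
    using Qs0 by (simp add: field_simps)
  also have "Qs powr \<alpha> / Qs = Qs powr (\<alpha> - 1)" using Qs0 by (simp add: powr_diff)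
  also have "\<dots> \<le> 1" using Qs0 Qs1 al by (simp add: powr_le1)
  finally have "T powr \<alpha> \<le> (\<Sum>b\<in>P. q b powr (1 - \<alpha>) * a b powr \<alpha>) * 1"
    by (smt (verit) mult_left_mono sum_nonneg powr_ge_zero mult_nonneg_nonneg)
  thus ?thesis unfolding Tsum Ssum T_def by simp
qed

lemma jensen_eq:
  fixes a :: "'b::finite \<Rightarrow> real" and \<alpha> :: real
  assumes a0: "\<And>b. 0 \<le> a b" and T: "0 < (\<Sum>b\<in>UNIV. a b)"
  shows "(\<Sum>b\<in>UNIV. if 0 < a b then (a b / (\<Sum>b\<in>UNIV. a b)) powr (1 - \<alpha>) * a b powr \<alpha> else 0)
       = (\<Sum>b\<in>UNIV. a b) powr \<alpha>"
proof -
  define T where "T = (\<Sum>b\<in>UNIV. a b)"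
  have "(if 0 < a b then (a b / T) powr (1 - \<alpha>) * a b powr \<alpha> else 0) = a b * T powr (\<alpha> - 1)" for b
  proof (cases "0 < a b")
    case True
    have T0: "0 < T" using T by (simp add: T_def)
    have e1: "(a b / T) powr (1 - \<alpha>) = a b powr (1 - \<alpha>) / T powr (1 - \<alpha>)"
      using True T0 by (simp add: powr_divide)
    have e2: "a b powr (1 - \<alpha>) * a b powr \<alpha> = a b"
      using True by (simp add: powr_add[symmetric])
    have e3: "T powr (\<alpha> - 1) = inverse (T powr (1 - \<alpha>))"
      using powr_minus[of T "1 - \<alpha>"] by simp
    have "(a b / T) powr (1 - \<alpha>) * a b powr \<alpha> = (a b powr (1 - \<alpha>) * a b powr \<alpha>) * inverse (T powr (1 - \<alpha>))"
      unfolding e1 by (simp add: divide_inverse mult_ac)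
    also have "\<dots> = a b * T powr (\<alpha> - 1)" unfolding e2 e3 ..
    finally show ?thesis using True by simp
  next
    case False thus ?thesis using a0[of b] by simp
  qed
  hence "(\<Sum>b\<in>UNIV. if 0 < a b then (a b / T) powr (1 - \<alpha>) * a b powr \<alpha> else 0) = T * T powr (\<alpha> - 1)"
    by (simp add: T_def sum_distrib_right)
  also have "\<dots> = T powr \<alpha>" using T by (simp add: T_def powr_diff)
  finally show ?thesis unfolding T_def .
qed

lemma sigma_blk:
  fixes rhoc :: "'b::finite \<Rightarrow> ('a::finite \<times> 'c::finite) cmat"
  shows "kron (mat 1 :: 'a cmat) (sigma_BC q rhoc) = blk (\<lambda>b. smat (q b) (kron (mat 1 :: 'a cmat) (ptrace1 (rhoc b))))"
  by (simp add: vec_eq_iff split_paired_all kron_entry sigma_BC_def blk_entry smat_entry mat_def)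

lemma cq_blk: "cq_state p rhoc = blk (\<lambda>b. smat (p b) (rhoc b))"
  by (simp add: vec_eq_iff split_paired_all cq_state_def blk_entry smat_entry)

lemma smat_vec: "smat c A *v u = complex_of_real c *s (A *v u)"
  by (simp add: vec_eq_iff smat_entry matrix_vector_mult_def sum_distrib_left mult.assoc)

lemma blk_vec: "(blk F *v u) $ (a, b, c) = (F b *v (\<chi> z. u $ (fst z, b, snd z))) $ (a, c)"
  by (simp add: matrix_vector_mult_def sum_triple sum_pair blk_entry if_mult0 sum_if0)

lemma blk_supp:
  fixes F G :: "'b::finite \<Rightarrow> ('a::finite \<times> 'c::finite) cmat"
  assumes "\<And>b. supp (F b) \<subseteq> supp (G b)"
  shows "supp (blk F) \<subseteq> supp (blk G)"
proof
  fix y assume "y \<in> supp (blk F)"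
  then obtain u where y: "y = blk F *v u" by (auto simp: supp_def)
  define ub where "ub = (\<lambda>b. (\<chi> z. u $ (fst z, b, snd z)) :: complex^('a \<times> 'c))"
  have "\<forall>b. \<exists>w. G b *v w = F b *v ub b"
  proof
    fix b
    have "F b *v ub b \<in> supp (G b)" using assms[of b] by (auto simp: supp_def)
    thus "\<exists>w. G b *v w = F b *v ub b" by (auto simp: supp_def)
  qed
  then obtain W where W: "\<And>b. G b *v W b = F b *v ub b" by metis
  define w :: "complex^('a \<times> 'b \<times> 'c)" where "w = (\<chi> x. case x of (a, b, c) \<Rightarrow> W b $ (a, c))"
  have wb: "(\<chi> z. w $ (fst z, b, snd z)) = W b" for b
    by (simp add: vec_eq_iff w_def split_paired_all)
  have "blk G *v w = y"
  proof -
    have "(blk G *v w) $ (a, b, c) = y $ (a, b, c)" for a b c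
      unfolding y blk_vec wb W ub_def ..
    thus ?thesis by (simp add: vec_eq_iff split_paired_all)
  qed
  thus "y \<in> supp (blk G)" unfolding supp_def by (metis rangeI)
qed

lemma smat_supp:
  assumes RK: "supp R \<subseteq> supp K" and pq: "p = 0 \<or> 0 < q"
  shows "supp (smat p R) \<subseteq> supp (smat q K)"
proof
  fix y assume "y \<in> supp (smat p R)"
  then obtain u where y: "y = smat p R *v u" by (auto simp: supp_def)
  show "y \<in> supp (smat q K)"
  proof (cases "p = 0")
    case True
    hence "y = smat q K *v 0" using y by (simp add: smat_vec)
    thus ?thesis unfolding supp_def by (metis rangeI)
  next
    case False
    hence q0: "0 < q" using pq by simp
    have "R *v u \<in> supp K" using RK by (auto simp: supp_def)
    then obtain w where w: "R *v u = K *v w" by (auto simp: supp_def)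
    have pq1: "complex_of_real (p / q) * complex_of_real q = complex_of_real p"
    proof -
      have "(p / q) * q = p" using q0 by simp
      thus ?thesis by (metis of_real_mult)
    qed
    have "smat q K *v (complex_of_real (p / q) *s w) = y"
      unfolding y smat_vec matvec_scale w vector_smult_assoc pq1 ..
    thus ?thesis unfolding supp_def by (metis rangeI)
  qed
qed

lemma smat3: "smat c1 A ** smat c2 B ** smat c3 C = smat (c1 * c2 * c3) (A ** B ** C)"
  by (simp add: smat_mult_left smat_mult_right smat_smat mult_ac)

theorem lemma4p2:
  fixes p :: "'b::finite \<Rightarrow> real"
    and rhoc :: "'b \<Rightarrow> ('a::finite \<times> 'c::finite) cmat"
    and \<alpha> :: real
  assumes "p \<in> prob_dists"
    and "\<And>b. density_op (rhoc b)"
    and "1 < \<alpha>"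
  shows "ereal (H_partial \<alpha> p rhoc) =
    (SUP q\<in>prob_dists. - renyi_D \<alpha> (cq_state p rhoc) (kron (mat 1 :: 'a cmat) (sigma_BC q rhoc)))"
proof -
  have p0: "\<And>b. 0 \<le> p b" and p1: "(\<Sum>b\<in>UNIV. p b) = 1" using assms(1) by (auto simp: prob_dists_def)
  have al: "1 < \<alpha>" by (rule assms(3))
  define x where "x = (1 - \<alpha>) / (2 * \<alpha>)"
  define K where "K = (\<lambda>b. kron (mat 1 :: 'a cmat) (ptrace1 (rhoc b)))"
  define S where "S = (\<lambda>b. mpow (K b) x)"
  define Y where "Y = (\<lambda>b. S b ** rhoc b ** S b)"
  define Q where "Q = (\<lambda>b. Re (mtrace (mpow (Y b) \<alpha>)))"
  have Rpsd: "psd (rhoc b)" and trR: "mtrace (rhoc b) = 1" for b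
    using assms(2)[of b] by (auto simp: density_op_def)
  have Ksupp: "supp (rhoc b) \<subseteq> supp (K b)" for b
    unfolding K_def by (rule supp_main(1)[OF Rpsd trR])
  have Kpsd: "psd (K b)" for b
    unfolding K_def by (rule supp_main(2)[OF Rpsd trR])
  have Y0: "Y b \<noteq> 0" for b
    unfolding Y_def S_def K_def by (rule supp_main(3)[OF Rpsd trR])
  have Kherm: "hermitian (K b)" for b using Kpsd[of b] by (simp add: psd_def)
  have Sherm: "hermitian (S b)" for b unfolding S_def by (rule mpow_herm[OF Kherm])
  have Ypsd: "psd (Y b)" for b unfolding Y_def by (rule psd_sandwich[OF Rpsd Sherm])
  have Yherm: "hermitian (Y b)" for b using Ypsd[of b] by (simp add: psd_def)
  have Qpos: "0 < Q b" for b unfolding Q_def by (rule mtrace_mpow_pos[OF Ypsd Y0])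
  have cond: "cond_H_down \<alpha> (rhoc b) = - ereal (1 / (\<alpha> - 1) * log 2 (Q b))" for b
    using Ksupp[of b, unfolded K_def] trR[of b]
    unfolding cond_H_down_def renyi_D_def Q_def Y_def S_def K_def x_def by simp
  have pw: "2 powr ((1 - \<alpha>) / \<alpha> * real_of_ereal (cond_H_down \<alpha> (rhoc b))) = Q b powr (1 / \<alpha>)" for b
  proof -
    have e: "(1 - \<alpha>) / \<alpha> * real_of_ereal (cond_H_down \<alpha> (rhoc b)) = log 2 (Q b) * (1 / \<alpha>)"
      unfolding cond using al by (simp add: field_simps)
    have "2 powr ((1 - \<alpha>) / \<alpha> * real_of_ereal (cond_H_down \<alpha> (rhoc b))) = (2 powr log 2 (Q b)) powr (1 / \<alpha>)"
      unfolding e powr_powr ..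
    also have "2 powr log 2 (Q b) = Q b" using Qpos[of b] by simp
    finally show ?thesis .
  qed
  define a where "a = (\<lambda>b. p b * Q b powr (1 / \<alpha>))"
  define T where "T = (\<Sum>b\<in>UNIV. a b)"
  have a0: "0 \<le> a b" for b using p0[of b] by (simp add: a_def)
  have apos: "0 < a b \<longleftrightarrow> 0 < p b" for b
    using p0[of b] Qpos[of b] by (simp add: a_def zero_less_mult_iff)
  obtain b0 where b0: "0 < p b0"
  proof -
    have "\<exists>b. 0 < p b"
    proof (rule ccontr)
      assume "\<not> ?thesis"
      hence "\<And>b. p b = 0" using p0 by (metis order_le_less)
      thus False using p1 by simp
    qed
    thus ?thesis using that by blast
  qed
  have T0: "0 < T"
  proof -
    have "a b0 \<le> T" unfolding T_def by (rule member_le_sum) (auto simp: a0)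
    moreover have "0 < a b0" using apos b0 by simp
    ultimately show ?thesis by simp
  qed
  define H where "H = \<alpha> / (1 - \<alpha>) * log 2 T"
  have Hval: "H_partial \<alpha> p rhoc = H"
    unfolding H_partial_def pw H_def T_def a_def ..
  define F where "F = (\<lambda>q. - renyi_D \<alpha> (cq_state p rhoc) (kron (mat 1 :: 'a cmat) (sigma_BC q rhoc)))"
  have trcq: "Re (mtrace (cq_state p rhoc)) = 1"
    unfolding cq_blk blk_trace mtrace_smat trR by (simp add: Re_sum p1)
  have Dq: "renyi_D \<alpha> (cq_state p rhoc) (kron (mat 1 :: 'a cmat) (sigma_BC q rhoc)) =
     (if supp (cq_state p rhoc) \<subseteq> supp (kron (mat 1 :: 'a cmat) (sigma_BC q rhoc))
      then ereal (1 / (\<alpha> - 1) * log 2 (\<Sum>b\<in>UNIV. (q b powr x * p b * q b powr x) powr \<alpha> * Q b))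
      else \<infinity>)" if q: "q \<in> prob_dists" for q
  proof -
    have q0: "0 \<le> q b" for b using q by (simp add: prob_dists_def)
    have sig: "kron (mat 1 :: 'a cmat) (sigma_BC q rhoc) = blk (\<lambda>b. smat (q b) (K b))"
      unfolding sigma_blk K_def ..
    have ms: "mpow (kron (mat 1 :: 'a cmat) (sigma_BC q rhoc)) x = blk (\<lambda>b. smat (q b powr x) (S b))"
    proof -
      have "mpow (blk (\<lambda>b. smat (q b) (K b))) x = blk (\<lambda>b. mpow (smat (q b) (K b)) x)"
        unfolding mpow_def by (rule mat_fun_blk) (simp add: herm_smat Kherm)
      also have "\<dots> = blk (\<lambda>b. smat (q b powr x) (S b))"
        unfolding S_def by (simp add: mpow_smat[OF Kpsd q0])
      finally show ?thesis unfolding sig .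
    qed
    define c where "c = (\<lambda>b. q b powr x * p b * q b powr x)"
    have c0: "0 \<le> c b" for b using p0[of b] by (simp add: c_def)
    have sw: "mpow (kron (mat 1 :: 'a cmat) (sigma_BC q rhoc)) x ** cq_state p rhoc ** mpow (kron (mat 1 :: 'a cmat) (sigma_BC q rhoc)) x
        = blk (\<lambda>b. smat (c b) (Y b))"
      unfolding ms cq_blk blk_mult smat3 c_def Y_def ..
    have mp: "mpow (blk (\<lambda>b. smat (c b) (Y b))) \<alpha> = blk (\<lambda>b. smat (c b powr \<alpha>) (mpow (Y b) \<alpha>))"
    proof -
      have "mpow (blk (\<lambda>b. smat (c b) (Y b))) \<alpha> = blk (\<lambda>b. mpow (smat (c b) (Y b)) \<alpha>)"
        unfolding mpow_def by (rule mat_fun_blk) (simp add: herm_smat Yherm)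
      also have "\<dots> = blk (\<lambda>b. smat (c b powr \<alpha>) (mpow (Y b) \<alpha>))"
        by (simp add: mpow_smat[OF Ypsd c0])
      finally show ?thesis .
    qed
    have tr: "Re (mtrace (mpow (blk (\<lambda>b. smat (c b) (Y b))) \<alpha>)) = (\<Sum>b\<in>UNIV. c b powr \<alpha> * Q b)"
      unfolding mp blk_trace mtrace_smat by (simp add: Re_sum Q_def)
    show ?thesis
      unfolding renyi_D_def x_def[symmetric] sw tr trcq by (simp add: c_def)
  qed
  have upper: "F q \<le> ereal H" if q: "q \<in> prob_dists" for q
  proof (cases "supp (cq_state p rhoc) \<subseteq> supp (kron (mat 1 :: 'a cmat) (sigma_BC q rhoc))")
    case False
    thus ?thesis unfolding F_def Dq[OF q] by simp
  next
    case True
    have q0: "0 \<le> q b" for b using q by (simp add: prob_dists_def)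
    have q1: "(\<Sum>b\<in>UNIV. q b) = 1" using q by (simp add: prob_dists_def)
    have qpos: "0 < q b" if pb: "0 < p b" for b
    proof (rule ccontr)
      assume "\<not> 0 < q b"
      hence qb: "q b = 0" using q0[of b] by simp
      have "\<exists>i. rhoc b $ i $ i \<noteq> 0"
      proof (rule ccontr)
        assume "\<not> ?thesis"
        hence "\<And>i. rhoc b $ i $ i = 0" by blast
        hence "mtrace (rhoc b) = 0" unfolding mtrace_def by simp
        thus False using trR[of b] by simp
      qed
      then obtain a0 c0 where nz: "rhoc b $ (a0, c0) $ (a0, c0) \<noteq> 0" by (metis surj_pair)
      define y where "y = cq_state p rhoc *v axis (a0, b, c0) 1"
      have "y \<in> supp (cq_state p rhoc)" unfolding y_def supp_def by (rule rangeI)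
      with True obtain w where w: "y = kron (mat 1 :: 'a cmat) (sigma_BC q rhoc) *v w"
        by (auto simp: supp_def)
      have "y $ (a0, b, c0) = complex_of_real (p b) * rhoc b $ (a0, c0) $ (a0, c0)"
        unfolding y_def axis_col cq_blk blk_entry smat_entry by simp
      moreover have "y $ (a0, b, c0) = 0"
        unfolding w sigma_blk blk_vec qb smat_zero_coeff by simp
      ultimately show False using nz pb by simp
    qed
    have tm: "(q b powr x * p b * q b powr x) powr \<alpha> * Q b =
        (if 0 < a b then q b powr (1 - \<alpha>) * a b powr \<alpha> else 0)" for b
    proof (cases "0 < p b")
      case False
      hence "p b = 0" using p0[of b] by simp
      thus ?thesis using apos[of b] by simp
    next
      case True
      have qb: "0 < q b" by (rule qpos[OF True])
      have "(q b powr x * p b * q b powr x) powr \<alpha> = q b powr (x * \<alpha>) * p b powr \<alpha> * q b powr (x * \<alpha>)"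
        using qb True by (simp add: powr_mult powr_powr)
      also have "\<dots> = q b powr (1 - \<alpha>) * p b powr \<alpha>"
      proof -
        have "q b powr (x * \<alpha>) * q b powr (x * \<alpha>) = q b powr (x * \<alpha> + x * \<alpha>)" by (rule powr_add[symmetric])
        also have "x * \<alpha> + x * \<alpha> = 1 - \<alpha>" using al by (simp add: x_def field_simps)
        finally show ?thesis by (simp add: mult_ac)
      qed
      finally have e1: "(q b powr x * p b * q b powr x) powr \<alpha> = q b powr (1 - \<alpha>) * p b powr \<alpha>" .
      have "a b powr \<alpha> = p b powr \<alpha> * (Q b powr (1 / \<alpha>)) powr \<alpha>"
        unfolding a_def using True Qpos[of b] by (simp add: powr_mult)
      also have "(Q b powr (1 / \<alpha>)) powr \<alpha> = Q b" using al Qpos[of b] by (simp add: powr_powr)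
      finally have e2: "a b powr \<alpha> = p b powr \<alpha> * Q b" .
      show ?thesis using True apos[of b] unfolding e1 e2 by (simp add: mult_ac)
    qed
    define Sq where "Sq = (\<Sum>b\<in>UNIV. (q b powr x * p b * q b powr x) powr \<alpha> * Q b)"
    have "T powr \<alpha> \<le> Sq"
      unfolding Sq_def tm T_def
      by (rule jensen_part[OF al q0 q1 a0]) (use apos qpos b0 in auto)
    moreover have TP: "0 < T powr \<alpha>" using T0 by simp
    ultimately have Sqp: "0 < Sq" by linarith
    have "log 2 (T powr \<alpha>) \<le> log 2 Sq"
      using TP Sqp \<open>T powr \<alpha> \<le> Sq\<close> by (subst log_le_cancel_iff) auto
    hence "\<alpha> * log 2 T \<le> log 2 Sq" using T0 by (simp add: log_powr)
    hence d: "\<alpha> * log 2 T / (\<alpha> - 1) \<le> log 2 Sq / (\<alpha> - 1)"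
      using al by (intro divide_right_mono) auto
    have hh: "H = - (\<alpha> * log 2 T / (\<alpha> - 1))" unfolding H_def using al by (simp add: field_simps)
    have "- (1 / (\<alpha> - 1) * log 2 Sq) \<le> H"
      unfolding hh using d by simp
    thus ?thesis unfolding F_def Dq[OF q] using True Sq_def by simp
  qed
  define qs where "qs = (\<lambda>b. a b / T)"
  have qs: "qs \<in> prob_dists"
    unfolding prob_dists_def qs_def using T0 a0
    by (simp add: sum_divide_distrib[symmetric] T_def)
  have attain: "F qs = ereal H"
  proof -
    have qs0: "0 \<le> qs b" for b using a0[of b] T0 by (simp add: qs_def)
    have sup: "supp (cq_state p rhoc) \<subseteq> supp (kron (mat 1 :: 'a cmat) (sigma_BC qs rhoc))"
      unfolding cq_blk sigma_blk
    proof (rule blk_supp, rule smat_supp)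
      fix b
      show "supp (rhoc b) \<subseteq> supp (kron (mat 1 :: 'a cmat) (ptrace1 (rhoc b)))"
        using Ksupp by (simp add: K_def)
      show "p b = 0 \<or> 0 < qs b"
        using p0[of b] apos[of b] T0 by (auto simp: qs_def)
    qed
    have tm: "(qs b powr x * p b * qs b powr x) powr \<alpha> * Q b =
        (if 0 < a b then (a b / T) powr (1 - \<alpha>) * a b powr \<alpha> else 0)" for b
    proof (cases "0 < p b")
      case False
      hence "p b = 0" using p0[of b] by simp
      thus ?thesis using apos[of b] by simp
    next
      case True
      have qb: "0 < qs b" using True apos[of b] T0 by (simp add: qs_def)
      have "(qs b powr x * p b * qs b powr x) powr \<alpha> = qs b powr (x * \<alpha>) * p b powr \<alpha> * qs b powr (x * \<alpha>)"
        using qb True by (simp add: powr_mult powr_powr)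
      also have "\<dots> = qs b powr (1 - \<alpha>) * p b powr \<alpha>"
      proof -
        have "qs b powr (x * \<alpha>) * qs b powr (x * \<alpha>) = qs b powr (x * \<alpha> + x * \<alpha>)" by (rule powr_add[symmetric])
        also have "x * \<alpha> + x * \<alpha> = 1 - \<alpha>" using al by (simp add: x_def field_simps)
        finally show ?thesis by (simp add: mult_ac)
      qed
      finally have e1: "(qs b powr x * p b * qs b powr x) powr \<alpha> = qs b powr (1 - \<alpha>) * p b powr \<alpha>" .
      have "a b powr \<alpha> = p b powr \<alpha> * (Q b powr (1 / \<alpha>)) powr \<alpha>"
        unfolding a_def using True Qpos[of b] by (simp add: powr_mult)
      also have "(Q b powr (1 / \<alpha>)) powr \<alpha> = Q b" using al Qpos[of b] by (simp add: powr_powr)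
      finally have e2: "a b powr \<alpha> = p b powr \<alpha> * Q b" .
      show ?thesis using True apos[of b] unfolding e1 e2 by (simp add: mult_ac qs_def)
    qed
    have Sq: "(\<Sum>b\<in>UNIV. (qs b powr x * p b * qs b powr x) powr \<alpha> * Q b) = T powr \<alpha>"
      unfolding tm T_def by (rule jensen_eq[OF a0]) (use T0 in \<open>simp add: T_def\<close>)
    have "- (1 / (\<alpha> - 1) * log 2 (T powr \<alpha>)) = H"
      unfolding H_def using T0 al by (simp add: log_powr field_simps)
    thus ?thesis unfolding F_def Dq[OF qs] Sq using sup by simp
  qed
  have "(SUP q\<in>prob_dists. F q) = ereal H"
  proof (rule antisym)
    show "(SUP q\<in>prob_dists. F q) \<le> ereal H" by (rule SUP_least) (rule upper)
    show "ereal H \<le> (SUP q\<in>prob_dists. F q)" unfolding attain[symmetric] by (rule SUP_upper[OF qs])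
  qed
  thus ?thesis unfolding Hval F_def by (rule sym)
qed

end
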